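(* Let $X\subseteq A^{\mathbb{N}}$ be a (one-sided) sofic shift over a finite alphabet $A$ with exactly one periodic point. Then this periodic point is $a^\omega$ for some letter $a\in A$, $X$ is countable, and for any bijection $\pi\colon A\to\{0,\dots,|A|-1\}$ with $\pi(a)=0$ the set $\pi(X)\subseteq\mathbb{N}^{\mathbb{N}}$ has finite coding dimension.
   Context: A one-sided sofic shift is the set of labels of right-infinite paths in a finite edge-labeled graph. A periodic point is $\mathbf{x}\in X$ with $\mathbf{x}=u^\omega$ for some nonempty word $u$. $\pi$ is applied letterwise. The coding dimension of $Y\subseteq\mathbb{N}^{\mathbb{N}}$ is the least $d\in\mathbb{N}$ with $\sum_iy_i\le d$ for all $\mathbf{y}\in Y$, if it exists. *)

theory Defs
  imports Main "HOL-Library.Countable_Set"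
begin

definition sofic_shift_of :: "('v \<times> 'a \<times> 'v) set \<Rightarrow> (nat \<Rightarrow> 'a) set" where
  "sofic_shift_of E = {x. \<exists>p :: nat \<Rightarrow> 'v. \<forall>i. (p i, x i, p (Suc i)) \<in> E}"

definition is_sofic :: "(nat \<Rightarrow> 'a) set \<Rightarrow> bool" where
  "is_sofic X \<longleftrightarrow> (\<exists>(E :: (nat \<times> 'a \<times> nat) set). finite E \<and> X = sofic_shift_of E)"

definition omega_word :: "'a list \<Rightarrow> nat \<Rightarrow> 'a" where
  "omega_word u = (\<lambda>i. u ! (i mod length u))"

definition periodic_points :: "(nat \<Rightarrow> 'a) set \<Rightarrow> (nat \<Rightarrow> 'a) set" where
  "periodic_points X = {x \<in> X. \<exists>u. u \<noteq> [] \<and> x = omega_word u}"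

text \<open>Y has finite coding dimension: there is d with sum_i y_i <= d for all y in Y
  (the series of naturals, valued in N \<union> {\<infinity>}, is bounded by d iff all partial sums are).\<close>
definition finite_coding_dimension :: "(nat \<Rightarrow> nat) set \<Rightarrow> bool" where
  "finite_coding_dimension Y \<longleftrightarrow> (\<exists>d::nat. \<forall>y\<in>Y. \<forall>n. (\<Sum>i<n. y i) \<le> d)"

end

theory Submission
  imports Defs
begin

lemma shift_in:
  assumes "x \<in> sofic_shift_of E"
  shows "(\<lambda>i. x (Suc i)) \<in> sofic_shift_of E"
proof -
  obtain p where "\<forall>i. (p i, x i, p (Suc i)) \<in> E" using assms unfolding sofic_shift_of_def by blast
  then have "\<forall>i. (p (Suc i), x (Suc i), p (Suc (Suc i))) \<in> E" by blast
  then show ?thesis unfolding sofic_shift_of_def by (intro CollectI exI[where x="\<lambda>i. p (Suc i)"]) simp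
qed

lemma shift_omega:
  assumes "u \<noteq> []"
  shows "(\<lambda>i. omega_word u (Suc i)) = omega_word (map (\<lambda>k. omega_word u (Suc k)) [0..<length u])"
proof
  fix i
  have L: "length u > 0" using assms by simp
  have "omega_word (map (\<lambda>k. omega_word u (Suc k)) [0..<length u]) i
      = omega_word u (Suc (i mod length u))"
    using L by (simp add: omega_word_def)
  also have "\<dots> = omega_word u (Suc i)"
    unfolding omega_word_def by (simp only: mod_Suc_eq)
  finally show "omega_word u (Suc i) = omega_word (map (\<lambda>k. omega_word u (Suc k)) [0..<length u]) i" ..
qed

lemma loop_periodic:
  assumes p: "\<forall>k. (p k, x k, p (Suc k)) \<in> E" and ij: "i < j" and eq: "p i = p j"
  shows "omega_word (map (\<lambda>k. x (i + k)) [0..<j - i]) \<in> sofic_shift_of E"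
proof -
  define L where "L = j - i"
  have L: "L > 0" using ij L_def by simp
  define q where "q = (\<lambda>k. p (i + k mod L))"
  have "(q k, omega_word (map (\<lambda>k. x (i + k)) [0..<L]) k, q (Suc k)) \<in> E" for k
  proof -
    have km: "k mod L < L" using L by simp
    have w: "omega_word (map (\<lambda>k. x (i + k)) [0..<L]) k = x (i + k mod L)"
      using km by (simp add: omega_word_def)
    have "q (Suc k) = p (Suc (i + k mod L))"
    proof (cases "Suc (k mod L) < L")
      case True
      have "Suc k mod L = Suc (k mod L) mod L" by (simp only: mod_Suc_eq)
      also have "\<dots> = Suc (k mod L)" using True by (rule mod_less)
      finally have "Suc k mod L = Suc (k mod L)" .
      then show ?thesis unfolding q_def by simp
    next
      case False
      then have s: "Suc (k mod L) = L" using km by simp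
      have "Suc k mod L = Suc (k mod L) mod L" by (simp only: mod_Suc_eq)
      then have "Suc k mod L = 0" using s by simp
      then have "q (Suc k) = p i" unfolding q_def by simp
      also have "\<dots> = p j" by (rule eq)
      also have "j = Suc (i + k mod L)" using s L_def ij by simp
      finally show ?thesis .
    qed
    then show ?thesis using p w unfolding q_def by simp
  qed
  then show ?thesis unfolding sofic_shift_of_def L_def by blast
qed

theorem mainTheorem13:
  fixes X :: "(nat \<Rightarrow> 'a::finite) set"
  assumes "is_sofic X"
    and "\<exists>!x. x \<in> periodic_points X"
  shows "\<exists>a. periodic_points X = {(\<lambda>_. a)}
           \<and> countable X
           \<and> (\<forall>\<pi> :: 'a \<Rightarrow> nat. bij_betw \<pi> UNIV {0..<card (UNIV :: 'a set)} \<and> \<pi> a = 0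
                \<longrightarrow> finite_coding_dimension ((\<lambda>x. \<pi> \<circ> x) ` X))"
proof -
  obtain E :: "(nat \<times> 'a \<times> nat) set" where fE: "finite E" and XE: "X = sofic_shift_of E"
    using assms(1) unfolding is_sofic_def by blast
  obtain x0 where x0: "x0 \<in> periodic_points X" and uq: "\<And>y. y \<in> periodic_points X \<Longrightarrow> y = x0"
    using assms(2) by blast
  obtain u where u: "u \<noteq> []" "x0 = omega_word u" "x0 \<in> X"
    using x0 unfolding periodic_points_def by blast
  have "(\<lambda>i. x0 (Suc i)) \<in> periodic_points X"
    unfolding periodic_points_def using u shift_omega[OF u(1)] shift_in[of x0 E] XE
    by (intro CollectI conjI exI[where x="map (\<lambda>k. omega_word u (Suc k)) [0..<length u]"]) auto
  then have sh: "(\<lambda>i. x0 (Suc i)) = x0" by (rule uq)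
  define a where "a = x0 0"
  have const: "x0 i = a" for i
  proof (induction i)
    case 0 then show ?case by (simp add: a_def)
  next
    case (Suc i) then show ?case using fun_cong[OF sh, of i] by simp
  qed
  then have x0a: "x0 = (\<lambda>_. a)" by auto
  have PP: "periodic_points X = {(\<lambda>_. a)}"
    using x0 uq x0a by blast
  define V where "V = fst ` E"
  have fV: "finite V" using fE V_def by simp
  have bad: "finite {i. x i \<noteq> a} \<and> card {i. x i \<noteq> a} \<le> card V" if xX: "x \<in> X" for x
  proof -
    obtain p where p: "\<forall>k. (p k, x k, p (Suc k)) \<in> E" using xX XE unfolding sofic_shift_of_def by blast
    have inj: "inj_on p {i. x i \<noteq> a}"
    proof (rule inj_onI, rule ccontr)
      fix i j assume i: "i \<in> {i. x i \<noteq> a}" and j: "j \<in> {i. x i \<noteq> a}" and e: "p i = p j" and ne: "i \<noteq> j"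
      have gen: "False" if lt: "i' < j'" and e': "p i' = p j'" and xi: "x i' \<noteq> a" for i' j'
      proof -
        have "omega_word (map (\<lambda>k. x (i' + k)) [0..<j' - i']) \<in> periodic_points X"
          unfolding periodic_points_def using loop_periodic[OF p lt e'] XE lt
          by (intro CollectI conjI exI[where x="map (\<lambda>k. x (i' + k)) [0..<j' - i']"]) auto
        then have "omega_word (map (\<lambda>k. x (i' + k)) [0..<j' - i']) 0 = a" using PP by auto
        then show False using xi lt by (simp add: omega_word_def)
      qed
      show False
      proof (cases "i < j")
        case True then show ?thesis using gen[OF True e] i by simp
      next
        case False then have "j < i" using ne by simp
        then show ?thesis using gen[of j i] e j by simp
      qed
    qed
    have sub: "p ` {i. x i \<noteq> a} \<subseteq> V" using p unfolding V_def by (auto intro: rev_image_eqI)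
    have fin: "finite {i. x i \<noteq> a}"
      using finite_imageD[OF finite_subset[OF sub fV] inj] .
    have "card {i. x i \<noteq> a} = card (p ` {i. x i \<noteq> a})" using card_image[OF inj] by simp
    also have "\<dots> \<le> card V" using card_mono[OF fV sub] .
    finally show ?thesis using fin by simp
  qed
  have cnt: "countable X"
  proof -
    define f where "f = (\<lambda>l::'a list. \<lambda>i. if i < length l then l ! i else a)"
    have "X \<subseteq> f ` lists UNIV"
    proof
      fix x assume xX: "x \<in> X"
      have fin: "finite {i. x i \<noteq> a}" using bad[OF xX] by simp
      then obtain M where M: "\<forall>i\<in>{i. x i \<noteq> a}. i < M"
        using finite_nat_bounded by blast
      have "x = f (map x [0..<M])"
        unfolding f_def using M by (auto intro!: ext)
      then show "x \<in> f ` lists UNIV" by blast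
    qed
    moreover have "countable (lists (UNIV :: 'a set))"
      by (intro countable_lists countable_finite) simp
    ultimately show ?thesis using countable_image countable_subset by blast
  qed
  have fcd: "finite_coding_dimension ((\<lambda>x. \<pi> \<circ> x) ` X)"
    if \<pi>: "bij_betw \<pi> UNIV {0..<card (UNIV :: 'a set)}" and \<pi>a: "\<pi> a = 0" for \<pi> :: "'a \<Rightarrow> nat"
  proof -
    define C where "C = card (UNIV :: 'a set)"
    have bnd: "\<pi> c \<le> C" for c
    proof -
      have "\<pi> c \<in> {0..<C}" using \<pi> unfolding bij_betw_def C_def by blast
      then show ?thesis by simp
    qed
    have "\<forall>y\<in>(\<lambda>x. \<pi> \<circ> x) ` X. \<forall>n. (\<Sum>i<n. y i) \<le> C * card V"
    proof (intro ballI allI)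
      fix y n assume "y \<in> (\<lambda>x. \<pi> \<circ> x) ` X"
      then obtain x where xX: "x \<in> X" and y: "y = \<pi> \<circ> x" by blast
      have B: "finite {i. x i \<noteq> a}" "card {i. x i \<noteq> a} \<le> card V" using bad[OF xX] by auto
      have "(\<Sum>i<n. y i) = (\<Sum>i\<in>{..<n} \<inter> {i. x i \<noteq> a}. y i) + (\<Sum>i\<in>{..<n} - {i. x i \<noteq> a}. y i)"
        by (rule sum.Int_Diff[OF finite_lessThan])
      also have "(\<Sum>i\<in>{..<n} - {i. x i \<noteq> a}. y i) = 0" using y \<pi>a by simp
      also have "(\<Sum>i\<in>{..<n} \<inter> {i. x i \<noteq> a}. y i) \<le> (\<Sum>i\<in>{..<n} \<inter> {i. x i \<noteq> a}. C)"
        using y bnd by (intro sum_mono) simp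
      also have "\<dots> = C * card ({..<n} \<inter> {i. x i \<noteq> a})" by simp
      also have "\<dots> \<le> C * card V"
        using card_mono[OF B(1), of "{..<n} \<inter> {i. x i \<noteq> a}"] B(2) by simp
      finally show "(\<Sum>i<n. y i) \<le> C * card V" by simp
    qed
    then show ?thesis unfolding finite_coding_dimension_def by blast
  qed
  show ?thesis using PP cnt fcd by blast
qed

end
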